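(* Each of the following five sets of four generalized Bell states in $\mathbb{C}^4\otimes\mathbb{C}^4$ is perfectly distinguishable by one-way LOCC using only projective measurements: $\{\ket{\psi_{00}}\}\cup T$ with $T$ one of $\{\ket{\psi_{01}},\ket{\psi_{10}},\ket{\psi_{33}}\}$, $\{\ket{\psi_{01}},\ket{\psi_{11}},\ket{\psi_{32}}\}$, $\{\ket{\psi_{01}},\ket{\psi_{12}},\ket{\psi_{31}}\}$, $\{\ket{\psi_{01}},\ket{\psi_{13}},\ket{\psi_{30}}\}$, $\{\ket{\psi_{01}},\ket{\psi_{11}},\ket{\psi_{30}}\}$.
   Context: Generalized Bell states in $\mathbb{C}^4\otimes\mathbb{C}^4$ (Alice holds the first factor, Bob the second): $\ket{\psi_{nm}}=\frac12\sum_{j=0}^{3}e^{2\pi i jn/4}\ket{j}_A\ket{j\oplus_4 m}_B$ for $n,m\in\{0,1,2,3\}$, where $j\oplus_4 m=(j+m)\bmod 4$. Perfect distinguishability by one-way LOCC using only projective measurements means: one party performs a projective measurement on her subsystem, communicates the outcome classically, and the other party then performs a projective measurement (depending on that outcome) whose result identifies with certainty which state of the set was shared. *)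

theory Defs
  imports Complex_Main
begin

text \<open>Vectors in C^4 (x) C^4 are functions nat => nat => complex, entry (j,k) meaning the
coefficient of |j>_A |k>_B, only indices j,k < 4 are relevant.
Operators on C^4 are 4x4 matrices nat => nat => complex (indices < 4).\<close>

type_synonym state44 = "nat \<Rightarrow> nat \<Rightarrow> complex"
type_synonym op4 = "nat \<Rightarrow> nat \<Rightarrow> complex"

definition bell :: "nat \<Rightarrow> nat \<Rightarrow> state44" where
  "bell n m = (\<lambda>j k. if j < 4 \<and> k = (j + m) mod 4
       then (1/2) * cis (2 * pi * real j * real n / 4) else 0)"

definition is_proj4 :: "op4 \<Rightarrow> bool" where
  "is_proj4 P \<longleftrightarrow> (\<forall>i<4. \<forall>j<4. P i j = cnj (P j i) \<and> (\<Sum>k<4. P i k * P k j) = P i j)"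

definition proj_meas4 :: "(nat \<Rightarrow> op4) \<Rightarrow> nat \<Rightarrow> bool" where
  "proj_meas4 P m \<longleftrightarrow> (\<forall>a<m. is_proj4 (P a)) \<and>
     (\<forall>i<4. \<forall>j<4. (\<Sum>a<m. P a i j) = (if i = j then 1 else 0))"

definition expval :: "op4 \<Rightarrow> op4 \<Rightarrow> state44 \<Rightarrow> complex" where
  "expval A B \<psi> = (\<Sum>j<4. \<Sum>k<4. \<Sum>j'<4. \<Sum>k'<4.
       cnj (\<psi> j k) * A j j' * B k k' * \<psi> j' k')"

text \<open>One-way LOCC with projective measurements, first measuring party Alice
(alice_first = True) or Bob (alice_first = False).\<close>
definition one_way_proj_dist :: "bool \<Rightarrow> ('i \<Rightarrow> state44) \<Rightarrow> 'i set \<Rightarrow> bool" where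
  "one_way_proj_dist alice_first st S \<longleftrightarrow>
     (\<exists>P m Q n g. proj_meas4 P m \<and> (\<forall>a<m. proj_meas4 (Q a) (n a)) \<and>
        (\<forall>s\<in>S. \<forall>a<m. \<forall>b<n a.
           (if alice_first then expval (P a) (Q a b) (st s) else expval (Q a b) (P a) (st s)) \<noteq> 0
           \<longrightarrow> g a b = s))"

definition one_way_LOCC_proj_distinguishable :: "('i \<Rightarrow> state44) \<Rightarrow> 'i set \<Rightarrow> bool" where
  "one_way_LOCC_proj_distinguishable st S \<longleftrightarrow>
     one_way_proj_dist True st S \<or> one_way_proj_dist False st S"

end

theory Submission
  imports Defs
begin

definition vv :: "nat \<Rightarrow> nat \<Rightarrow> complex" where
  "vv a j = (if a < 4 \<and> j < 4 then of_int ([[1,0,1,0],[0,1,0,1],[1,0,-1,0],[0,1,0,-1::int]] ! a ! j) else 0)"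

definition PP :: "nat \<Rightarrow> op4" where "PP a = (\<lambda>i j. vv a i * vv a j / 2)"

lemma four: "{..<4::nat} = {0,1,2,3}" by auto
lemma all4: "(\<forall>i<4::nat. Q i) \<longleftrightarrow> Q 0 \<and> Q 1 \<and> Q 2 \<and> Q 3"
  by (auto simp: less_Suc_eq numeral_eq_Suc)

lemma vv_real: "cnj (vv a j) = vv a j" by (simp add: vv_def)

lemma PP_meas: "proj_meas4 PP 4"
  unfolding proj_meas4_def is_proj4_def PP_def all4 four
  by (simp add: vv_def vv_real)

lemma expval_PP: "expval (PP a) (PP b) \<psi> =
   cnj (\<Sum>j<4. \<Sum>k<4. vv a j * vv b k * \<psi> j k) * (\<Sum>j<4. \<Sum>k<4. vv a j * vv b k * \<psi> j k) / 4"
proof -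
  have "cnj (\<Sum>j<4. \<Sum>k<4. vv a j * vv b k * \<psi> j k) = (\<Sum>j<4. \<Sum>k<4. vv a j * vv b k * cnj (\<psi> j k))"
    by (simp add: vv_real)
  moreover have "(\<Sum>j<4. \<Sum>k<4. vv a j * vv b k * cnj (\<psi> j k)) * (\<Sum>j<4. \<Sum>k<4. vv a j * vv b k * \<psi> j k) / 4
     = (\<Sum>j<4. \<Sum>k<4. \<Sum>j'<4. \<Sum>k'<4. cnj (\<psi> j k) * PP a j j' * PP b k k' * \<psi> j' k')"
    apply (simp add: sum_distrib_left sum_distrib_right sum_divide_distrib PP_def algebra_simps)
    apply (rule sum.cong[OF refl])
    apply (rule sum.swap)
    done
  ultimately show ?thesis unfolding expval_def by simp
qed

lemma cis_i: "cis (2 * pi * real j * real n / 4) = \<i> ^ (j * n)"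
proof -
  have "cis (2 * pi * real j * real n / 4) = cis (real (j*n) * (pi/2))" by (simp add: field_simps)
  also have "\<dots> = cis (pi/2) ^ (j*n)" by (rule DeMoivre[symmetric])
  also have "cis (pi/2) = \<i>" by (simp add: complex_eq_iff)
  finally show ?thesis .
qed

definition cc :: "nat \<Rightarrow> nat \<Rightarrow> nat \<Rightarrow> nat \<Rightarrow> complex" where
  "cc a b n m = (\<Sum>j<4. vv a j * vv b ((j+m) mod 4) * \<i>^(j*n) / 2)"

lemma cc_eq: "(\<Sum>j<4. \<Sum>k<4. vv a j * vv b k * bell n m j k) = cc a b n m"
proof -
  have "(\<Sum>k<4. vv a j * vv b k * bell n m j k) = vv a j * vv b ((j+m) mod 4) * \<i>^(j*n) / 2" if "j<4" for j
  proof -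
    have "(\<Sum>k<4. vv a j * vv b k * bell n m j k) = (\<Sum>k<4. if k = (j+m) mod 4 then vv a j * vv b k * \<i>^(j*n) / 2 else 0)"
      unfolding bell_def cis_i by (rule sum.cong) (auto simp: that)
    also have "\<dots> = vv a j * vv b ((j+m) mod 4) * \<i>^(j*n) / 2"
      by (subst sum.delta) auto
    finally show ?thesis .
  qed
  then show ?thesis unfolding cc_def by (rule sum.cong[OF refl]) simp
qed

lemma expval_bell: "expval (PP a) (PP b) (bell n m) \<noteq> 0 \<longleftrightarrow> cc a b n m \<noteq> 0"
  unfolding expval_PP cc_eq
  by (metis complex_cnj_zero_iff divide_eq_0_iff mult_eq_0_iff zero_neq_numeral)

lemma distinguish:
  assumes "\<forall>a<4. \<forall>b<4. \<forall>s\<in>S. \<forall>s'\<in>S. cc a b (fst s) (snd s) \<noteq> 0 \<longrightarrow> cc a b (fst s') (snd s') \<noteq> 0 \<longrightarrow> s = s'"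
  shows "one_way_LOCC_proj_distinguishable (\<lambda>(n::nat, m::nat). bell n m) S"
  unfolding one_way_LOCC_proj_distinguishable_def one_way_proj_dist_def
proof (intro disjI1 exI conjI)
  show "proj_meas4 PP 4" by (rule PP_meas)
  show "\<forall>a<4. proj_meas4 ((\<lambda>a. PP) a) ((\<lambda>a. 4) a)" using PP_meas by simp
  show "\<forall>s\<in>S. \<forall>a<4. \<forall>b<(\<lambda>a. 4::nat) a.
       (if True then expval (PP a) ((\<lambda>a. PP) a b) ((\<lambda>(n, m). bell n m) s)
        else expval ((\<lambda>a. PP) a b) (PP a) ((\<lambda>(n, m). bell n m) s)) \<noteq> 0 \<longrightarrow>
       (\<lambda>a b. THE s. s \<in> S \<and> cc a b (fst s) (snd s) \<noteq> 0) a b = s"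
  proof (intro ballI allI impI)
    fix s a b assume s: "s \<in> S" and a: "a < 4" and b: "b < (\<lambda>a. 4::nat) a"
      and ne: "(if True then expval (PP a) ((\<lambda>a. PP) a b) ((\<lambda>(n, m). bell n m) s)
        else expval ((\<lambda>a. PP) a b) (PP a) ((\<lambda>(n, m). bell n m) s)) \<noteq> 0"
    obtain n m where sn: "s = (n,m)" by (cases s)
    have c: "cc a b (fst s) (snd s) \<noteq> 0" using ne expval_bell sn by simp
    show "(\<lambda>a b. THE s. s \<in> S \<and> cc a b (fst s) (snd s) \<noteq> 0) a b = s"
      using assms a b s c by (auto intro!: the_equality)
  qed
qed


lemma ipows: "\<i>^3 = -\<i>" "\<i>^4 = 1" "\<i>^5 = \<i>" "\<i>^6 = -1" "\<i>^7 = -\<i>" "\<i>^8 = 1" "\<i>^9 = \<i>"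
  by (simp_all add: eval_nat_numeral)

lemma set0: "one_way_LOCC_proj_distinguishable (\<lambda>(n::nat, m::nat). bell n m) ({(0,0)} \<union> {(0,1),(1,0),(3,3)})"
  apply (rule distinguish)
  unfolding all4
  apply (simp add: cc_def four vv_def ipows)
  done

lemma set1: "one_way_LOCC_proj_distinguishable (\<lambda>(n::nat, m::nat). bell n m) ({(0,0)} \<union> {(0,1),(1,1),(3,2)})"
  apply (rule distinguish)
  unfolding all4
  apply (simp add: cc_def four vv_def ipows)
  done

lemma set2: "one_way_LOCC_proj_distinguishable (\<lambda>(n::nat, m::nat). bell n m) ({(0,0)} \<union> {(0,1),(1,2),(3,1)})"
  apply (rule distinguish)
  unfolding all4
  apply (simp add: cc_def four vv_def ipows)
  done

lemma set3: "one_way_LOCC_proj_distinguishable (\<lambda>(n::nat, m::nat). bell n m) ({(0,0)} \<union> {(0,1),(1,3),(3,0)})"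
  apply (rule distinguish)
  unfolding all4
  apply (simp add: cc_def four vv_def ipows)
  done

lemma set4: "one_way_LOCC_proj_distinguishable (\<lambda>(n::nat, m::nat). bell n m) ({(0,0)} \<union> {(0,1),(1,1),(3,0)})"
  apply (rule distinguish)
  unfolding all4
  apply (simp add: cc_def four vv_def ipows)
  done


theorem theorem7:
  shows "\<forall>T \<in> { {(0,1),(1,0),(3,3)}, {(0,1),(1,1),(3,2)}, {(0,1),(1,2),(3,1)},
                  {(0,1),(1,3),(3,0)}, {(0,1),(1,1),(3,0)} }.
           one_way_LOCC_proj_distinguishable (\<lambda>(n::nat, m::nat). bell n m) ({(0,0)} \<union> T)"
  using set0 set1 set2 set3 set4 by (simp add: insert_commute)

end
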